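(* The $(1,2)$ elitist black-box complexity of $\textsc{OneMax}$ (both Las Vegas and Monte Carlo) is $O(n)$. For any $\lambda\ge 2$, there are $(1,\lambda)$ Las Vegas and Monte Carlo elitist black-box algorithms that need at most $O(n/\log\lambda)$ generations on $\textsc{OneMax}$.
   Context: For $z\in\{0,1\}^n$, $\textsc{Om}_z(x)=n-\sum_{i=1}^n (x_i\oplus z_i)$; $\textsc{OneMax}=\{\textsc{Om}_z : z\in\{0,1\}^n\}$. A $(\mu,\lambda)$ elitist black-box algorithm maintains a multiset $X$ of $\mu$ search points; in each generation it samples $\lambda$ offspring from a distribution depending only on $X$ and the ranking of the fitness values in $X$ (not the values), learns the ranking of the offspring's fitness values, and the new $X$ must consist of $\mu$ offspring of highest fitness (ties broken arbitrarily; parents discarded). Runtime: number of sampled search points until an optimum is first sampled; generations counted analogously. Las Vegas complexity: min over algorithms of max over functions of expected runtime; $p$-Monte Carlo complexity: min over algorithms of smallest $T$ with success within $T$ evaluations with probability $\ge 1-p$ on every function (for every constant $p\in(0,1)$). *)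

theory Defs
  imports "HOL-Probability.Probability"
begin

text \<open>Search points of \<open>{0,1}^n\<close> are boolean lists of length n (True = 1).\<close>

definition om :: "bool list \<Rightarrow> bool list \<Rightarrow> nat" where
  "om z x = length z - (\<Sum>i<length z. if x ! i \<noteq> z ! i then 1 else 0)"

definition is_opt :: "nat \<Rightarrow> (bool list \<Rightarrow> nat) \<Rightarrow> bool list \<Rightarrow> bool" where
  "is_opt n f x \<longleftrightarrow> length x = n \<and> (\<forall>y. length y = n \<longrightarrow> f y \<le> f x)"

text \<open>Ranking of the fitness values of a list of search points: the set of index
  pairs (i,j) with f(ys_i) <= f(ys_j).  Only this is revealed to the algorithm.\<close>

definition rank :: "(bool list \<Rightarrow> nat) \<Rightarrow> bool list list \<Rightarrow> (nat \<times> nat) set" where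
  "rank f ys = {(i, j). i < length ys \<and> j < length ys \<and> f (ys ! i) \<le> f (ys ! j)}"

text \<open>An algorithm: distribution of the initial search point; the offspring
  distribution (a joint distribution of the lambda offspring), depending only on
  the current parent (mu = 1, so the ranking of X is trivial); and the (possibly
  randomized) selection of the surviving offspring, which may only use the
  parent, the offspring and the ranking of the offspring's fitness values.\<close>

record alg =
  a_init :: "bool list pmf"
  a_off  :: "bool list \<Rightarrow> bool list list pmf"
  a_sel  :: "bool list \<Rightarrow> bool list list \<Rightarrow> (nat \<times> nat) set \<Rightarrow> nat pmf"

definition elitist_1_lambda :: "nat \<Rightarrow> nat \<Rightarrow> alg \<Rightarrow> bool" where
  "elitist_1_lambda n lam A \<longleftrightarrow>
     set_pmf (a_init A) \<subseteq> {x. length x = n} \<and>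
     (\<forall>x. length x = n \<longrightarrow>
        (\<forall>ys \<in> set_pmf (a_off A x). length ys = lam \<and> (\<forall>y \<in> set ys. length y = n))) \<and>
     (\<forall>x ys (g :: bool list \<Rightarrow> nat). length ys = lam \<longrightarrow>
        set_pmf (a_sel A x ys (rank g ys)) \<subseteq>
          {i. i < lam \<and> (\<forall>j < lam. g (ys ! j) \<le> g (ys ! i))})"

text \<open>Starting from a (non-optimal) parent x, the distribution of the number of
  further generations until an optimum of f is first sampled, truncated at t
  generations (None = no optimum sampled within t generations).\<close>

primrec gen_run :: "alg \<Rightarrow> nat \<Rightarrow> (bool list \<Rightarrow> nat) \<Rightarrow> nat \<Rightarrow> bool list \<Rightarrow> nat option pmf" where
  "gen_run A n f 0 x = return_pmf None"
| "gen_run A n f (Suc t) x =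
     bind_pmf (a_off A x) (\<lambda>ys.
       if (\<exists>y \<in> set ys. is_opt n f y) then return_pmf (Some 1)
       else bind_pmf (a_sel A x ys (rank f ys))
              (\<lambda>i. map_pmf (map_option Suc) (gen_run A n f t (ys ! i))))"

definition gens_dist :: "alg \<Rightarrow> nat \<Rightarrow> (bool list \<Rightarrow> nat) \<Rightarrow> nat \<Rightarrow> nat option pmf" where
  "gens_dist A n f t =
     bind_pmf (a_init A) (\<lambda>x. if is_opt n f x then return_pmf (Some 0) else gen_run A n f t x)"

definition prob_gens_le :: "alg \<Rightarrow> nat \<Rightarrow> (bool list \<Rightarrow> nat) \<Rightarrow> nat \<Rightarrow> real" where
  "prob_gens_le A n f t = measure_pmf.prob (gens_dist A n f t) (range Some)"

text \<open>The runtime (number of evaluated search points) is R = 1 + lam * G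
  (initial point plus lam offspring per generation).  P(R <= T):\<close>
definition prob_evals_le :: "alg \<Rightarrow> nat \<Rightarrow> nat \<Rightarrow> (bool list \<Rightarrow> nat) \<Rightarrow> nat \<Rightarrow> real" where
  "prob_evals_le A n lam f T =
     measure_pmf.prob (gens_dist A n f T) {Some g | g. 1 + lam * g \<le> T}"

text \<open>Expectations via the tail-sum formula E[X] = sum_t P(X > t).\<close>
definition exp_gens :: "alg \<Rightarrow> nat \<Rightarrow> (bool list \<Rightarrow> nat) \<Rightarrow> ennreal" where
  "exp_gens A n f = (\<Sum>t. ennreal (1 - prob_gens_le A n f t))"

definition exp_evals :: "alg \<Rightarrow> nat \<Rightarrow> nat \<Rightarrow> (bool list \<Rightarrow> nat) \<Rightarrow> ennreal" where
  "exp_evals A n lam f = (\<Sum>s. ennreal (1 - prob_evals_le A n lam f s))"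

end

theory Submission
  imports Defs
begin

fun hdist :: "bool list \<Rightarrow> bool list \<Rightarrow> nat" where
  "hdist (a#as) (b#bs) = (if a \<noteq> b then 1 else 0) + hdist as bs"
| "hdist _ _ = 0"

lemma sum_mism: "length x = length z \<Longrightarrow>
   (\<Sum>i<length z. if x ! i \<noteq> z ! i then 1 else 0) = hdist x z"
proof (induction x arbitrary: z)
  case Nil then show ?case by simp
next
  case (Cons a as)
  then obtain b bs where z: "z = b # bs" by (cases z) auto
  with Cons show ?case by (simp add: sum.lessThan_Suc_shift del: sum.lessThan_Suc)
qed

lemma om_hdist: "length x = length z \<Longrightarrow> om z x = length z - hdist x z"
  unfolding om_def by (subst sum_mism) auto

lemma hdist_append: "length a = length c \<Longrightarrow> hdist (a @ b) (c @ d) = hdist a c + hdist b d"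
proof (induction a arbitrary: c)
  case Nil then show ?case by simp
next
  case (Cons x xs) then show ?case by (cases c) auto
qed

lemma hdist_self[simp]: "hdist x x = 0"
  by (induction x) auto

lemma hdist_le: "hdist x y \<le> length y"
  by (induction x y rule: hdist.induct) auto

lemma hdist_0: "length x = length y \<Longrightarrow> hdist x y = 0 \<Longrightarrow> x = y"
proof (induction x arbitrary: y)
  case Nil then show ?case by simp
next
  case (Cons a as) then show ?case by (cases y) (auto split: if_splits)
qed

lemma is_opt_z: "length z = n \<Longrightarrow> is_opt n (om z) z"
  unfolding is_opt_def
  by (auto simp: om_def)

definition mrk :: "bool list \<Rightarrow> nat" where
  "mrk x = length (dropWhile Not (rev x)) - 1"

lemma mrk_state: "mrk (pre @ True # replicate r False) = length pre"
  by (simp add: mrk_def dropWhile_append)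

lemma mrk_le: "mrk x \<le> length x"
  unfolding mrk_def using length_dropWhile_le[of Not "rev x"] by simp

definition offs :: "nat \<Rightarrow> nat \<Rightarrow> nat \<Rightarrow> bool list \<Rightarrow> bool list list" where
  "offs n lam k x = (let m = mrk x; d = min k (n - m);
     tlx = (if m + d < n then True # replicate (n - m - d - 1) False else []);
     ps = List.n_lists d [False, True] @ replicate (lam - 2 ^ d) (replicate d False)
   in map (\<lambda>p. take m x @ p @ tlx) ps)"

definition selx :: "bool list list \<Rightarrow> (nat \<times> nat) set \<Rightarrow> nat" where
  "selx ys R = (LEAST i. i < length ys \<and> (\<forall>j<length ys. (j, i) \<in> R))"

definition myalg :: "nat \<Rightarrow> nat \<Rightarrow> nat \<Rightarrow> alg" where
  "myalg n lam k = \<lparr>a_init = return_pmf (True # replicate (n - 1) False),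
     a_off = (\<lambda>x. return_pmf (offs n lam k x)),
     a_sel = (\<lambda>x ys R. return_pmf (selx ys R))\<rparr>"

lemma myalg_simps[simp]:
  "a_init (myalg n lam k) = return_pmf (True # replicate (n - 1) False)"
  "a_off (myalg n lam k) = (\<lambda>x. return_pmf (offs n lam k x))"
  "a_sel (myalg n lam k) = (\<lambda>x ys R. return_pmf (selx ys R))"
  by (simp_all add: myalg_def)

lemma selx_prop:
  assumes "length ys \<ge> 1"
  shows "selx ys (rank g ys) < length ys \<and>
         (\<forall>j<length ys. g (ys ! j) \<le> g (ys ! selx ys (rank g ys)))"
proof -
  let ?S = "(\<lambda>j. g (ys ! j)) ` {..<length ys}"
  have "finite ?S" "?S \<noteq> {}" using assms by (auto simp: lessThan_empty_iff)
  then have "Max ?S \<in> ?S" by (rule Max_in)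
  then obtain i where i: "i < length ys" "g (ys ! i) = Max ?S" by auto
  have "\<forall>j<length ys. g (ys ! j) \<le> g (ys ! i)"
    using i \<open>finite ?S\<close> by auto
  then have ex: "\<exists>i. i < length ys \<and> (\<forall>j<length ys. (j, i) \<in> rank g ys)"
    using i by (auto simp: rank_def)
  show ?thesis
    using LeastI_ex[OF ex] unfolding selx_def by (auto simp: rank_def)
qed

lemma len_nl: "length (List.n_lists d [False, True]) = 2 ^ d"
  by (simp add: length_n_lists numeral_2_eq_2)

lemma offs_len:
  assumes "length x = n" "2 ^ k \<le> lam"
  shows "length (offs n lam k x) = lam \<and> (\<forall>y\<in>set (offs n lam k x). length y = n)"
proof -
  define m where "m = mrk x"
  define d where "d = min k (n - m)"
  have mn: "m \<le> n" using mrk_le[of x] assms m_def by simp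
  have "2 ^ d \<le> (2::nat) ^ k" unfolding d_def by simp
  then have dl: "2 ^ d \<le> lam" using assms by linarith
  show ?thesis
    using mn dl assms
    by (auto simp: offs_def Let_def m_def[symmetric] d_def[symmetric] len_nl set_n_lists)
       (auto simp: d_def)
qed

lemma elit:
  assumes "n \<ge> 1" "2 ^ k \<le> lam" "k \<ge> 1"
  shows "elitist_1_lambda n lam (myalg n lam k)"
proof -
  have lam: "lam \<ge> 1" using assms(2) by (metis one_le_power one_le_numeral order_trans)
  show ?thesis
    unfolding elitist_1_lambda_def
    using assms offs_len[OF _ assms(2)] selx_prop lam
    by (auto simp: myalg_def)
qed



lemma om_split:
  assumes "length a = length a'" "length b = length b'" "length c = length c'"
  shows "om (a' @ b' @ c') (a @ b @ c) = length a' + length b' + length c' - (hdist a a' + hdist b b' + hdist c c')"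
  using assms by (simp add: om_hdist hdist_append)

lemma natlem: "(h1::nat) \<le> b \<Longrightarrow> h2 \<le> c \<Longrightarrow> p + b + c - h2 \<le> p + b + c - (h1 + h2) \<Longrightarrow> h1 = 0"
  by linarith

lemma run:
  assumes k1: "k \<ge> 1" and lk: "2 ^ k \<le> lam" and zl: "length z = n"
  shows "m < n \<Longrightarrow> (n - m - 1) div k + 1 \<le> t \<Longrightarrow>
    set_pmf (gen_run (myalg n lam k) n (om z) t (take m z @ True # replicate (n - m - 1) False))
      \<subseteq> {Some g | g. g \<le> (n - m - 1) div k + 1}"
proof (induction "n - m" arbitrary: m t rule: less_induct)
  case less
  define x where "x = take m z @ True # replicate (n - m - 1) False"
  obtain t' where t: "t = Suc t'" using less.prems by (cases t) auto
  have ltm: "length (take m z) = m" using less.prems zl by simp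
  have mx: "mrk x = m" unfolding x_def using mrk_state ltm by metis
  have xl: "length x = n" unfolding x_def using less.prems zl by simp
  have tx: "take m x = take m z" unfolding x_def using ltm by simp
  define d where "d = min k (n - m)"
  define tlx where "tlx = (if m + d < n then True # replicate (n - m - d - 1) False else [])"
  define ps where "ps = List.n_lists d [False, True] @ replicate (lam - 2 ^ d) (replicate d False)"
  let ?ys = "offs n lam k x"
  have ys: "?ys = map (\<lambda>p. take m z @ p @ tlx) ps"
    unfolding offs_def Let_def mx tx unfolding d_def[symmetric]
    unfolding tlx_def[symmetric] ps_def[symmetric] by (rule refl)
  have psl: "\<forall>p\<in>set ps. length p = d" by (auto simp: ps_def set_n_lists)
  have gr: "gen_run (myalg n lam k) n (om z) t x = (if \<exists>y\<in>set ?ys. is_opt n (om z) y then return_pmf (Some 1)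
     else map_pmf (map_option Suc) (gen_run (myalg n lam k) n (om z) t' (?ys ! selx ?ys (rank (om z) ?ys))))"
    by (simp add: t bind_return_pmf)
  show ?case
  proof (cases "\<exists>y\<in>set ?ys. is_opt n (om z) y")
    case True then show ?thesis using gr x_def by simp
  next
    case False
    have big: "k < n - m"
    proof (rule ccontr)
      assume "\<not> k < n - m"
      then have dd: "d = n - m" "tlx = []" by (auto simp: d_def tlx_def)
      have "drop m z \<in> set ps" using zl dd by (auto simp: ps_def set_n_lists)
      then have "take m z @ drop m z @ tlx \<in> set ?ys" unfolding ys by auto
      then have "z \<in> set ?ys" using dd by simp
      with is_opt_z[OF zl] False show False by blast
    qed
    then have dk: "d = k" and tl: "tlx = True # replicate (n - m - k - 1) False"
      by (auto simp: d_def tlx_def)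
    define i where "i = selx ?ys (rank (om z) ?ys)"
    have lys: "length ?ys = lam" using offs_len[OF xl lk] by simp
    have lam1: "length ?ys \<ge> 1" using lys lk k1
      by (metis one_le_numeral one_le_power order_trans)
    have sp: "i < length ?ys" "\<forall>j<length ?ys. om z (?ys ! j) \<le> om z (?ys ! i)"
      using selx_prop[OF lam1, of "om z"] i_def by auto
    have "?ys ! i \<in> set ?ys" using sp by simp
    then obtain q where q: "q \<in> set ps" "?ys ! i = take m z @ q @ tlx" unfolding ys by auto
    have ql: "length q = k" using q psl dk by auto
    define blk where "blk = take k (drop m z)"
    have bl: "length blk = k" using big zl by (simp add: blk_def)
    define c where "c = take m z @ blk @ tlx"
    have "blk \<in> set ps" using bl dk by (auto simp: ps_def set_n_lists)
    then have "c \<in> set ?ys" unfolding ys c_def by auto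
    then obtain j where j: "j < length ?ys" "?ys ! j = c" by (auto simp: in_set_conv_nth)
    have cle: "om z c \<le> om z (?ys ! i)" using sp j by metis
    have zs: "z = take m z @ blk @ drop (m + k) z"
      by (simp add: blk_def) (metis append_take_drop_id add.commute drop_drop)
    have ltl: "length tlx = length (drop (m + k) z)" using tl big zl by simp
    define P where "P = length (take m z)"
    define B where "B = length blk"
    define C where "C = length (drop (m + k) z)"
    define H1 where "H1 = hdist q blk"
    define H2 where "H2 = hdist tlx (drop (m + k) z)"
    have e1: "om z c = P + B + C - (hdist (take m z) (take m z) + hdist blk blk + H2)"
      unfolding c_def P_def B_def C_def H2_def
      by (subst zs, rule om_split) (auto simp: ltl)
    have e2: "om z (?ys ! i) = P + B + C - (hdist (take m z) (take m z) + H1 + H2)"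
      unfolding q(2) P_def B_def C_def H1_def H2_def
      by (subst zs, rule om_split) (auto simp: ltl ql bl)
    have h1: "H1 \<le> B" unfolding H1_def B_def by (rule hdist_le)
    have h2: "H2 \<le> C" unfolding H2_def C_def by (rule hdist_le)
    have z1: "hdist (take m z) (take m z) = 0" "hdist blk blk = 0" by simp_all
    have c3: "P + B + C - (hdist (take m z) (take m z) + hdist blk blk + H2)
        \<le> P + B + C - (hdist (take m z) (take m z) + H1 + H2)"
      using cle by (simp only: e1 e2)
    then have c4: "P + B + C - H2 \<le> P + B + C - (H1 + H2)" by (simp only: z1 add_0_left)
    have "H1 = 0" using natlem[OF h1 h2 c4] .
    then have "hdist q blk = 0" by (simp add: H1_def)
    then have qb: "q = blk" using hdist_0[of q blk] ql bl by simp
    have nx: "?ys ! i = take (m + k) z @ True # replicate (n - (m + k) - 1) False"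
      using q(2) qb tl by (simp add: blk_def take_add diff_diff_add)
    have dv: "(n - m - 1) div k = (n - (m + k) - 1) div k + 1"
    proof -
      have e: "n - m - 1 = (n - (m + k) - 1) + k" using big by simp
      have "((n - (m + k) - 1) + k) div k = (n - (m + k) - 1) div k + 1"
        using k1 by (intro div_add_self2) simp
      then show ?thesis by (simp only: e)
    qed
    have lt1: "n - (m + k) < n - m" using big k1 by simp
    have lt2: "m + k < n" using big by simp
    have lt3: "(n - (m + k) - 1) div k + 1 \<le> t'" using less.prems(2) dv t by simp
    have IH: "set_pmf (gen_run (myalg n lam k) n (om z) t' (take (m + k) z @ True # replicate (n - (m + k) - 1) False))
      \<subseteq> {Some g | g. g \<le> (n - (m + k) - 1) div k + 1}"
      by (rule less.hyps[OF lt1 lt2 lt3])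
    have "gen_run (myalg n lam k) n (om z) t x = map_pmf (map_option Suc) (gen_run (myalg n lam k) n (om z) t' (?ys ! i))"
      using gr False unfolding i_def by simp
    then have S: "set_pmf (gen_run (myalg n lam k) n (om z) t x) = map_option Suc ` set_pmf (gen_run (myalg n lam k) n (om z) t' (take (m + k) z @ True # replicate (n - (m + k) - 1) False))"
      by (simp only: nx set_map_pmf)
    show ?thesis unfolding x_def[symmetric] S
    proof
      fix y assume "y \<in> map_option Suc ` set_pmf (gen_run (myalg n lam k) n (om z) t' (take (m + k) z @ True # replicate (n - (m + k) - 1) False))"
      then obtain g where "g \<le> (n - (m + k) - 1) div k + 1" "y = Some (Suc g)" using IH by auto
      then show "y \<in> {Some g | g. g \<le> (n - m - 1) div k + 1}" using dv by auto
    qed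
  qed
qed


lemma gd:
  assumes k1: "k \<ge> 1" and lk: "2 ^ k \<le> lam" and zl: "length z = n" and n1: "n \<ge> 1"
    and tB: "(n - 1) div k + 1 \<le> t"
  shows "set_pmf (gens_dist (myalg n lam k) n (om z) t) \<subseteq> {Some g | g. g \<le> (n - 1) div k + 1}"
proof -
  have x0: "True # replicate (n - 1) False = take 0 z @ True # replicate (n - 0 - 1) False" by simp
  have R: "set_pmf (gen_run (myalg n lam k) n (om z) t (True # replicate (n - 1) False))
     \<subseteq> {Some g | g. g \<le> (n - 1) div k + 1}"
    unfolding x0 using run[OF k1 lk zl, of 0 t] n1 tB by simp
  show ?thesis unfolding gens_dist_def using R by (auto simp: bind_return_pmf)
qed

lemma prob1: "set_pmf M \<subseteq> E \<Longrightarrow> measure_pmf.prob M E = 1"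
  by (subst measure_pmf.prob_eq_1) (auto intro: AE_pmfI)

lemma tailsum:
  fixes P :: "nat \<Rightarrow> real"
  assumes "\<forall>t\<ge>K. P t = 1" "\<forall>t. P t \<ge> 0"
  shows "(\<Sum>t. ennreal (1 - P t)) \<le> ennreal (real K)"
proof -
  have "(\<Sum>t. ennreal (1 - P t)) = (\<Sum>t<K. ennreal (1 - P t))"
    by (rule suminf_finite) (use assms in auto)
  also have "\<dots> \<le> (\<Sum>t<K. 1)"
    by (rule sum_mono) (use assms in \<open>auto simp: ennreal_le_1\<close>)
  also have "\<dots> = ennreal (real K)" by (simp add: ennreal_of_nat_eq_real_of_nat)
  finally show ?thesis .
qed

lemma main:
  assumes n1: "n \<ge> 1" and k1: "k \<ge> 1" and lk: "2 ^ k \<le> lam"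
  shows "elitist_1_lambda n lam (myalg n lam k) \<and>
    (\<forall>z. length z = n \<longrightarrow>
       exp_gens (myalg n lam k) n (om z) \<le> ennreal (real ((n - 1) div k + 1)) \<and>
       exp_evals (myalg n lam k) n lam (om z) \<le> ennreal (real (1 + lam * ((n - 1) div k + 1))) \<and>
       (\<forall>t \<ge> (n - 1) div k + 1. prob_gens_le (myalg n lam k) n (om z) t = 1) \<and>
       (\<forall>T \<ge> 1 + lam * ((n - 1) div k + 1). prob_evals_le (myalg n lam k) n lam (om z) T = 1))"
proof -
  define B where "B = (n - 1) div k + 1"
  have lam1: "lam \<ge> 1" using lk by (metis one_le_numeral one_le_power order_trans)
  have PG: "prob_gens_le (myalg n lam k) n (om z) t = 1" if "length z = n" "B \<le> t" for z t
    unfolding prob_gens_le_def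
    by (rule prob1, rule order_trans[OF gd[OF k1 lk that(1) n1]]) (use that in \<open>auto simp: B_def\<close>)
  have PE: "prob_evals_le (myalg n lam k) n lam (om z) T = 1" if "length z = n" "1 + lam * B \<le> T" for z T
  proof -
    have BT: "B \<le> T" using that lam1
      by (metis add_leD2 le_trans mult_le_mono1 mult_1)
    have S: "set_pmf (gens_dist (myalg n lam k) n (om z) T) \<subseteq> {Some g | g. g \<le> B}"
      using gd[OF k1 lk that(1) n1, of T] BT by (simp add: B_def)
    have "{Some g | g. g \<le> B} \<subseteq> {Some g | g. 1 + lam * g \<le> T}"
    proof
      fix y assume "y \<in> {Some g | g. g \<le> B}"
      then obtain g where g: "y = Some g" "g \<le> B" by auto
      have "lam * g \<le> lam * B" using g(2) by simp
      then have "1 + lam * g \<le> T" using that(2) by linarith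
      then show "y \<in> {Some g | g. 1 + lam * g \<le> T}" using g(1) by auto
    qed
    then show ?thesis unfolding prob_evals_le_def using S by (intro prob1) blast
  qed
  show ?thesis
  proof (intro conjI allI impI)
    show "elitist_1_lambda n lam (myalg n lam k)" by (rule elit[OF n1 lk k1])
  next
    fix z :: "bool list" assume z: "length z = n"
    show "exp_gens (myalg n lam k) n (om z) \<le> ennreal (real ((n - 1) div k + 1))"
      unfolding exp_gens_def B_def[symmetric]
      by (rule tailsum) (use PG[OF z] in \<open>auto simp: prob_gens_le_def\<close>)
    show "exp_evals (myalg n lam k) n lam (om z) \<le> ennreal (real (1 + lam * ((n - 1) div k + 1)))"
      unfolding exp_evals_def B_def[symmetric]
      by (rule tailsum) (use PE[OF z] in \<open>auto simp: prob_evals_le_def\<close>)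
    show "\<And>t. (n - 1) div k + 1 \<le> t \<Longrightarrow> prob_gens_le (myalg n lam k) n (om z) t = 1"
      using PG[OF z] by (simp add: B_def)
    show "\<And>T. 1 + lam * ((n - 1) div k + 1) \<le> T \<Longrightarrow> prob_evals_le (myalg n lam k) n lam (om z) T = 1"
      using PE[OF z] by (simp add: B_def)
  qed
qed


lemma kex: "(lam::nat) \<ge> 2 \<Longrightarrow> \<exists>k\<ge>1. 2 ^ k \<le> lam \<and> lam < 2 ^ (k + 1)"
proof -
  assume l: "lam \<ge> 2"
  then obtain k where k: "2 ^ k \<le> lam" "lam < 2 ^ (k + 1)"
    using ex_power_ivl1[of 2 lam] by auto
  have "k \<noteq> 0" using k l by (cases k) auto
  then show ?thesis using k by (intro exI[of _ k]) auto
qed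

lemma bnd:
  assumes n1: "n \<ge> 1" and k1: "k \<ge> 1" and l2: "(lam::nat) \<ge> 2" and lk: "lam < 2 ^ (k + 1)"
  shows "real ((n - 1) div k + 1) \<le> 2 * (real n / ln (real lam) + 1)"
proof -
  have kp: "real k > 0" using k1 by simp
  have "k * ((n - 1) div k) \<le> n" using times_div_less_eq_dividend[of k "n - 1"] by linarith
  then have "real k * real ((n - 1) div k) \<le> real n" by (metis of_nat_le_iff of_nat_mult)
  then have d1: "real ((n - 1) div k) \<le> real n / real k" using kp by (simp add: field_simps)
  have lp: "ln (real lam) > 0" using l2 by simp
  have rl: "real lam < real ((2::nat) ^ (k + 1))" using lk by (simp only: of_nat_less_iff)
  have "ln (real lam) < ln (real ((2::nat) ^ (k + 1)))"
    using rl l2 by (subst ln_less_cancel_iff) (auto simp del: of_nat_power)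
  also have "\<dots> = real (k + 1) * ln 2" by (simp only: of_nat_power of_nat_numeral) (rule ln_realpow)
  also have "\<dots> \<le> real (k + 1)" using ln_2_less_1 by (simp add: mult_left_le)
  finally have "ln (real lam) / 2 \<le> real k" using k1 by simp
  then have "real n / real k \<le> real n / (ln (real lam) / 2)"
    using lp by (intro divide_left_mono) auto
  also have "\<dots> = 2 * (real n / ln (real lam))" by simp
  finally show ?thesis using d1 by simp
qed

theorem corollary2:
  shows
   "(\<exists>C :: real. \<forall>n \<ge> 1. \<exists>A. elitist_1_lambda n 2 A \<and>
        (\<forall>z. length z = n \<longrightarrow> exp_evals A n 2 (om z) \<le> ennreal (C * real n)))
    \<and> (\<forall>p :: real. 0 < p \<and> p < 1 \<longrightarrow>
        (\<exists>C :: real. \<forall>n \<ge> 1. \<exists>A. elitist_1_lambda n 2 A \<and>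
          (\<forall>z. length z = n \<longrightarrow> prob_evals_le A n 2 (om z) (nat \<lceil>C * real n\<rceil>) \<ge> 1 - p)))
    \<and> (\<exists>C :: real. \<forall>n \<ge> 1. \<forall>lam \<ge> 2. \<exists>A. elitist_1_lambda n lam A \<and>
        (\<forall>z. length z = n \<longrightarrow>
           exp_gens A n (om z) \<le> ennreal (C * (real n / ln (real lam) + 1))))
    \<and> (\<forall>p :: real. 0 < p \<and> p < 1 \<longrightarrow>
        (\<exists>C :: real. \<forall>n \<ge> 1. \<forall>lam \<ge> 2. \<exists>A. elitist_1_lambda n lam A \<and>
          (\<forall>z. length z = n \<longrightarrow>
             prob_gens_le A n (om z) (nat \<lceil>C * (real n / ln (real lam) + 1)\<rceil>) \<ge> 1 - p)))"
proof (intro conjI allI impI)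
  show "\<exists>C :: real. \<forall>n \<ge> 1. \<exists>A. elitist_1_lambda n 2 A \<and>
        (\<forall>z. length z = n \<longrightarrow> exp_evals A n 2 (om z) \<le> ennreal (C * real n))"
  proof (intro exI allI impI)
    fix n :: nat assume n1: "n \<ge> 1"
    have l21: "2 ^ 1 \<le> (2::nat)" by simp
    have B1: "(n - 1) div 1 + 1 = n" using n1 by simp
    note M = main[OF n1 order_refl l21, unfolded B1]
    show "elitist_1_lambda n 2 (myalg n 2 1) \<and>
        (\<forall>z. length z = n \<longrightarrow> exp_evals (myalg n 2 1) n 2 (om z) \<le> ennreal (3 * real n))"
    proof (intro conjI allI impI)
      show "elitist_1_lambda n 2 (myalg n 2 1)" using M by simp
      fix z :: "bool list" assume z: "length z = n"
      have "exp_evals (myalg n 2 1) n 2 (om z) \<le> ennreal (real (1 + 2 * n))" using M z by blast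
      also have "\<dots> \<le> ennreal (3 * real n)" using n1 by (intro ennreal_leI) simp
      finally show "exp_evals (myalg n 2 1) n 2 (om z) \<le> ennreal (3 * real n)" .
    qed
  qed
next
  fix p :: real assume p: "0 < p \<and> p < 1"
  show "\<exists>C :: real. \<forall>n \<ge> 1. \<exists>A. elitist_1_lambda n 2 A \<and>
          (\<forall>z. length z = n \<longrightarrow> prob_evals_le A n 2 (om z) (nat \<lceil>C * real n\<rceil>) \<ge> 1 - p)"
  proof (intro exI allI impI)
    fix n :: nat assume n1: "n \<ge> 1"
    have l21: "2 ^ 1 \<le> (2::nat)" by simp
    have B1: "(n - 1) div 1 + 1 = n" using n1 by simp
    note M = main[OF n1 order_refl l21, unfolded B1]
    have T0: "3 * real n = real (3 * n)" by simp
    have T: "nat \<lceil>3 * real n\<rceil> = 3 * n" unfolding T0 by (simp only: ceiling_of_nat nat_int)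
    show "elitist_1_lambda n 2 (myalg n 2 1) \<and>
          (\<forall>z. length z = n \<longrightarrow> prob_evals_le (myalg n 2 1) n 2 (om z) (nat \<lceil>3 * real n\<rceil>) \<ge> 1 - p)"
      using M n1 p unfolding T by auto
  qed
next
  show "\<exists>C :: real. \<forall>n \<ge> 1. \<forall>lam \<ge> 2. \<exists>A. elitist_1_lambda n lam A \<and>
        (\<forall>z. length z = n \<longrightarrow>
           exp_gens A n (om z) \<le> ennreal (C * (real n / ln (real lam) + 1)))"
  proof (rule exI[of _ 2], intro allI impI)
    fix n lam :: nat assume n1: "n \<ge> 1" and l2: "lam \<ge> 2"
    obtain k where k: "k \<ge> 1" "2 ^ k \<le> lam" "lam < 2 ^ (k + 1)" using kex[OF l2] by auto
    note M = main[OF n1 k(1) k(2)]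
    have b: "real ((n - 1) div k + 1) \<le> 2 * (real n / ln (real lam) + 1)" by (rule bnd[OF n1 k(1) l2 k(3)])
    show "\<exists>A. elitist_1_lambda n lam A \<and> (\<forall>z. length z = n \<longrightarrow>
           exp_gens A n (om z) \<le> ennreal (2 * (real n / ln (real lam) + 1)))"
    proof (rule exI[of _ "myalg n lam k"])
    show "elitist_1_lambda n lam (myalg n lam k) \<and> (\<forall>z. length z = n \<longrightarrow>
           exp_gens (myalg n lam k) n (om z) \<le> ennreal (2 * (real n / ln (real lam) + 1)))"
    proof (intro conjI allI impI)
      show "elitist_1_lambda n lam (myalg n lam k)" using M by simp
      fix z :: "bool list" assume z: "length z = n"
      have "exp_gens (myalg n lam k) n (om z) \<le> ennreal (real ((n - 1) div k + 1))" using M z by simp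
      also have "\<dots> \<le> ennreal (2 * (real n / ln (real lam) + 1))" using b by (rule ennreal_leI)
      finally show "exp_gens (myalg n lam k) n (om z) \<le> ennreal (2 * (real n / ln (real lam) + 1))" .
    qed
    qed
  qed
next
  fix p :: real assume p: "0 < p \<and> p < 1"
  show "\<exists>C :: real. \<forall>n \<ge> 1. \<forall>lam \<ge> 2. \<exists>A. elitist_1_lambda n lam A \<and>
          (\<forall>z. length z = n \<longrightarrow>
             prob_gens_le A n (om z) (nat \<lceil>C * (real n / ln (real lam) + 1)\<rceil>) \<ge> 1 - p)"
  proof (rule exI[of _ 2], intro allI impI)
    fix n lam :: nat assume n1: "n \<ge> 1" and l2: "lam \<ge> 2"
    obtain k where k: "k \<ge> 1" "2 ^ k \<le> lam" "lam < 2 ^ (k + 1)" using kex[OF l2] by auto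
    note M = main[OF n1 k(1) k(2)]
    have b: "real ((n - 1) div k + 1) \<le> 2 * (real n / ln (real lam) + 1)" by (rule bnd[OF n1 k(1) l2 k(3)])
    have tb: "(n - 1) div k + 1 \<le> nat \<lceil>2 * (real n / ln (real lam) + 1)\<rceil>"
    proof -
      have "real ((n - 1) div k + 1) \<le> of_int \<lceil>2 * (real n / ln (real lam) + 1)\<rceil>"
        using b le_of_int_ceiling order_trans by blast
      then show ?thesis by linarith
    qed
    show "\<exists>A. elitist_1_lambda n lam A \<and> (\<forall>z. length z = n \<longrightarrow>
             prob_gens_le A n (om z) (nat \<lceil>2 * (real n / ln (real lam) + 1)\<rceil>) \<ge> 1 - p)"
      using M tb p by (intro exI[of _ "myalg n lam k"]) auto
  qed
qed

end
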